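(* Let $f$ be an analytic self-map of $\mathbb{B}^N$ and let $e_1=(1,0)\in\partial\mathbb{B}^N$ be a boundary repelling fixed point of $f$ with multiplier $\alpha>1$. Let $\{Z_n\}_{n=1}^\infty$ be a backward-iteration sequence for $f$ (i.e. $f(Z_{n+1})=Z_n$) with $Z_n\to e_1$ and $d_{\mathbb{B}^N}(Z_n,Z_{n+1})\le a=\frac{\alpha-1}{\alpha+1}$ for all $n$. Let $(z_n,w_n)=\widetilde{\mathcal{C}}(Z_n)\in\mathbb{H}^N$, where $\widetilde{\mathcal{C}}(u,v)=\left(\frac{1-u}{1+u},\frac{v}{1+u}\right)$, and let $t_n=\operatorname{Re} z_n-\|w_n\|^2$. Then \[\lim_{n\to\infty}\frac{\operatorname{Re} z_n}{t_n}=1,\quad \lim_{n\to\infty}\frac{\operatorname{Im} z_n}{t_n}=0,\quad \lim_{n\to\infty}\frac{\|w_n\|^2}{t_n}=0,\quad \lim_{n\to\infty}\frac{t_n}{t_{n+1}}=\alpha.\] In particular, the sequence $\{Z_n\}$ is special, i.e. $\displaystyle\lim_{n\to\infty}\frac{\|Z_n-(Z_n,e_1)e_1\|^2}{1-|(Z_n,e_1)|^2}=0$.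
   Context: $\mathbb{B}^N$ is the unit ball of $\mathbb{C}^N$ with $(Z,W)=\sum Z_j\overline{W_j}$, $d_{\mathbb{B}^N}(Z,W)^2=1-\frac{(1-\|Z\|^2)(1-\|W\|^2)}{|1-(Z,W)|^2}$. $\mathbb{H}^N=\{(z,w)\in\mathbb{C}\times\mathbb{C}^{N-1}:\operatorname{Re} z>\|w\|^2\}$ is the Siegel domain; $\widetilde{\mathcal{C}}$ is a biholomorphism $\mathbb{B}^N\to\mathbb{H}^N$ sending $e_1$ to $0$. Horospheres: $H(X,R)=\{Z:\frac{|1-(Z,X)|^2}{1-\|Z\|^2}<R\}$. A point $q\in\partial\mathbb{B}^N$ is a boundary repelling fixed point of $f$ with multiplier $\alpha>1$ if $\alpha$ is the smallest constant with $f(H(q,R))\subseteq H(q,\alpha R)$ for all $R>0$ (equivalently $\alpha=\liminf_{Z\to q}\frac{1-\|f(Z)\|}{1-\|Z\|}$). *)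

theory Defs
  imports "HOL-Analysis.Analysis"
begin

text \<open>C^N is modelled as complex^'n (N = CARD('n)); the norm on complex^'n is the
Euclidean (L2) norm. The distinguished coordinate of e_1 is an index i0 :: 'n.\<close>

definition cinner :: "complex^'n \<Rightarrow> complex^'n \<Rightarrow> complex" where
  "cinner Z W = (\<Sum>i\<in>UNIV. Z$i * cnj (W$i))"

definition unit_ball :: "(complex^'n) set" where
  "unit_ball = {Z. norm Z < 1}"

definition unit_sphere :: "(complex^'n) set" where
  "unit_sphere = {Z. norm Z = 1}"

definition holo_on :: "(complex^'n) set \<Rightarrow> (complex^'n \<Rightarrow> complex^'m) \<Rightarrow> bool" where
  "holo_on S f \<longleftrightarrow> (\<forall>Z\<in>S. \<exists>L. (f has_derivative L) (at Z) \<and> (\<forall>c z. L (c *s z) = c *s L z))"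

definition analytic_selfmap_ball :: "(complex^'n \<Rightarrow> complex^'n) \<Rightarrow> bool" where
  "analytic_selfmap_ball f \<longleftrightarrow> holo_on unit_ball f \<and> f ` unit_ball \<subseteq> unit_ball"

definition dB :: "complex^'n \<Rightarrow> complex^'n \<Rightarrow> real" where
  "dB Z W = sqrt (1 - (1 - (norm Z)\<^sup>2) * (1 - (norm W)\<^sup>2) / (cmod (1 - cinner Z W))\<^sup>2)"

definition horo :: "complex^'n \<Rightarrow> real \<Rightarrow> (complex^'n) set" where
  "horo X R = {Z \<in> unit_ball. (cmod (1 - cinner Z X))\<^sup>2 / (1 - (norm Z)\<^sup>2) < R}"

definition boundary_repelling_fp :: "(complex^'n \<Rightarrow> complex^'n) \<Rightarrow> complex^'n \<Rightarrow> real \<Rightarrow> bool" where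
  "boundary_repelling_fp f q \<alpha> \<longleftrightarrow>
     q \<in> unit_sphere \<and> \<alpha> > 1 \<and>
     (\<forall>R>0. f ` horo q R \<subseteq> horo q (\<alpha> * R)) \<and>
     (\<forall>\<beta>. (\<forall>R>0. f ` horo q R \<subseteq> horo q (\<beta> * R)) \<longrightarrow> \<alpha> \<le> \<beta>)"

text \<open>Cayley transform C~(u,v) = ((1-u)/(1+u), v/(1+u)), where u = Z$i0 and v the other
coordinates. The w-component is returned as a vector whose i0-coordinate is 0.\<close>
definition cayley_z :: "'n \<Rightarrow> complex^'n \<Rightarrow> complex" where
  "cayley_z i0 Z = (1 - Z$i0) / (1 + Z$i0)"

definition cayley_w :: "'n \<Rightarrow> complex^'n \<Rightarrow> complex^'n" where
  "cayley_w i0 Z = (\<chi> i. if i = i0 then 0 else Z$i / (1 + Z$i0))"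

end

theory Submission
  imports Defs "HOL-Complex_Analysis.Conformal_Mappings"
begin


lemma cinner_add_left: "cinner (x + y) z = cinner x z + cinner y z"
  by (simp add: cinner_def distrib_right sum.distrib)
lemma cinner_diff_left: "cinner (x - y) z = cinner x z - cinner y z"
  by (simp add: cinner_def left_diff_distrib sum_subtractf)
lemma cinner_add_right: "cinner z (x + y) = cinner z x + cinner z y"
  by (simp add: cinner_def distrib_left sum.distrib)
lemma cinner_diff_right: "cinner z (x - y) = cinner z x - cinner z y"
  by (simp add: cinner_def right_diff_distrib sum_subtractf)
lemma cinner_smult_left: "cinner (c *s x) y = c * cinner x y"
  by (simp add: cinner_def sum_distrib_left mult.assoc)
lemma cinner_smult_right: "cinner x (c *s y) = cnj c * cinner x y"
  by (simp add: cinner_def sum_distrib_left mult_ac)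
lemma cinner_commute: "cinner y x = cnj (cinner x y)"
  by (simp add: cinner_def mult.commute)
lemma cinner_zero_left[simp]: "cinner 0 y = 0" by (simp add: cinner_def)
lemma cinner_zero_right[simp]: "cinner y 0 = 0" by (simp add: cinner_def)
lemma norm_sq_vec: "(norm (x::complex^'n))\<^sup>2 = (\<Sum>i\<in>UNIV. (cmod (x$i))\<^sup>2)"
  by (simp add: norm_vec_def L2_set_def sum_nonneg)
lemma cinner_self: "cinner x x = complex_of_real ((norm x)\<^sup>2)"
proof -
  have "\<And>i. x$i * cnj (x$i) = complex_of_real ((cmod (x$i))\<^sup>2)"
    by (metis complex_norm_square)
  then show ?thesis by (simp add: cinner_def norm_sq_vec of_real_sum)
qed
lemma cinner_self_Re: "Re (cinner x x) = (norm x)\<^sup>2"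
  by (simp add: cinner_self)
lemma cinner_CS: "cmod (cinner x y) \<le> norm x * norm y"
proof -
  have "cmod (cinner x y) \<le> (\<Sum>i\<in>UNIV. cmod (x$i * cnj (y$i)))"
    unfolding cinner_def by (rule norm_sum)
  also have "\<dots> = (\<Sum>i\<in>UNIV. \<bar>cmod (x$i)\<bar> * \<bar>cmod (y$i)\<bar>)"
    by (simp add: norm_mult)
  also have "\<dots> \<le> L2_set (\<lambda>i. cmod (x$i)) UNIV * L2_set (\<lambda>i. cmod (y$i)) UNIV"
    by (rule L2_set_mult_ineq)
  finally show ?thesis by (simp add: norm_vec_def)
qed
lemma norm_smult_vec: "norm (c *s (x::complex^'n)) = cmod c * norm x"
proof -
  have "(norm (c *s x))\<^sup>2 = (cmod c * norm x)\<^sup>2"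
    by (simp add: norm_sq_vec norm_mult power_mult_distrib sum_distrib_left)
  then show ?thesis by (simp add: power2_eq_iff_nonneg)
qed
lemma cinner_axis: "cinner Z (axis i (1::complex)) = Z$i"
  by (simp add: cinner_def axis_def if_distrib cong: if_cong)
lemma norm_add_sq: "(norm (x + y :: complex^'n))\<^sup>2 = (norm x)\<^sup>2 + (norm y)\<^sup>2 + 2 * Re (cinner x y)"
proof -
  have "complex_of_real ((norm (x+y))\<^sup>2) = cinner (x+y) (x+y)" by (simp add: cinner_self)
  also have "\<dots> = cinner x x + cinner y y + (cinner x y + cnj (cinner x y))"
    by (simp add: cinner_add_left cinner_add_right cinner_commute[of x y])
  finally have "complex_of_real ((norm (x+y))\<^sup>2) = cinner x x + cinner y y + (cinner x y + cnj (cinner x y))" .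
  then have "Re (complex_of_real ((norm (x+y))\<^sup>2)) = Re (cinner x x + cinner y y + (cinner x y + cnj (cinner x y)))" by simp
  then show ?thesis by (simp add: cinner_self_Re)
qed
lemma norm_diff_sq: "(norm (x - y :: complex^'n))\<^sup>2 = (norm x)\<^sup>2 + (norm y)\<^sup>2 - 2 * Re (cinner x y)"
  using norm_add_sq[of x "-y"] by (simp add: cinner_def sum_negf)



lemma lt1mult0: "0 \<le> (a::real) \<Longrightarrow> a < 1 \<Longrightarrow> 0 \<le> c \<Longrightarrow> c < 1 \<Longrightarrow> a * c < 1"
proof -
  assume "0 \<le> a" "a < 1" "0 \<le> c" "c < 1"
  then have "a * c \<le> a" by (simp add: mult_left_le)
  then show ?thesis using \<open>a < 1\<close> by linarith
qed
lemma lt1mult: "cmod a < 1 \<Longrightarrow> cmod c < 1 \<Longrightarrow> cmod a * cmod c < 1"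
  by (rule lt1mult0) auto

lemma one_plus_nz: "cmod (z::complex) < 1 \<Longrightarrow> 1 + z \<noteq> 0"
proof
  assume "cmod z < 1" "1 + z = 0"
  then have "z = -1" by (simp add: add_eq_0_iff)
  then show False using \<open>cmod z < 1\<close> by simp
qed

lemma cinner_lt1: "norm x < 1 \<Longrightarrow> norm y < 1 \<Longrightarrow> cmod (cinner x y) < 1"
proof -
  assume "norm x < 1" "norm y < 1"
  then have "norm x * norm y < 1"
    using lt1mult0[of "norm x" "norm y"] by simp
  then show ?thesis using cinner_CS[of x y] by linarith
qed

lemma one_minus_cinner_nz: "norm x < 1 \<Longrightarrow> norm y < 1 \<Longrightarrow> 1 - cinner x y \<noteq> 0"
  using cinner_lt1[of x y] by auto

definition pal :: "complex^'n \<Rightarrow> complex^'n \<Rightarrow> complex" where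
  "pal b x = cinner x b / cinner b b"
definition psq :: "complex^'n \<Rightarrow> complex" where
  "psq b = complex_of_real (sqrt (1 - (norm b)\<^sup>2))"
definition phi :: "complex^'n \<Rightarrow> complex^'n \<Rightarrow> complex^'n" where
  "phi b x = (1 / (1 - cinner x b)) *s ((1 - pal b x) *s b - psq b *s (x - pal b x *s b))"

lemma phi_inner: "cinner (phi b x) y =
   ((1 - pal b x) * cinner b y - psq b * (cinner x y - pal b x * cinner b y)) / (1 - cinner x b)"
proof -
  have "cinner (phi b x) y = (1/(1 - cinner x b)) * cinner ((1 - pal b x) *s b - psq b *s (x - pal b x *s b)) y"
    by (simp only: phi_def cinner_smult_left)
  also have "cinner ((1 - pal b x) *s b - psq b *s (x - pal b x *s b)) y = (1 - pal b x) * cinner b y - psq b * (cinner x y - pal b x * cinner b y)"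
    by (simp only: cinner_diff_left cinner_smult_left)
  finally show ?thesis by simp
qed

lemma phi_self: "phi b b = 0"
  by (cases "b = 0") (auto simp: phi_def pal_def cinner_self)

lemma pal_eq: "cinner x b = pal b x * complex_of_real ((norm b)\<^sup>2)"
  by (cases "b = 0") (auto simp: pal_def cinner_self)

lemma alg1: fixes al :: complex and \<beta> X :: real
  shows "(cmod (1 - al * complex_of_real \<beta>))\<^sup>2 - ((cmod (1 - al))\<^sup>2 * \<beta> + (1 - \<beta>) * (X - (cmod al)\<^sup>2 * \<beta>))
        = (1 - \<beta>) * (1 - X)"
  by (simp only: cmod_power2) (simp add: algebra_simps power2_eq_square)

lemma phi_norm:
  assumes b: "norm b < 1" and x: "norm x < 1"
  shows "1 - (norm (phi b x))\<^sup>2 = (1 - (norm b)\<^sup>2) * (1 - (norm x)\<^sup>2) / (cmod (1 - cinner x b))\<^sup>2"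
proof -
  define al where "al = pal b x"
  define \<beta> where "\<beta> = (norm b)\<^sup>2"
  define p where "p = x - al *s b"
  define s where "s = psq b"
  have b1: "\<beta> < 1" using b by (simp add: \<beta>_def abs_square_less_1)
  have ss: "(cmod s)\<^sup>2 = 1 - \<beta>" using b1 by (simp add: s_def psq_def \<beta>_def)
  have xb: "cinner x b = al * complex_of_real \<beta>" by (simp add: al_def \<beta>_def pal_eq)
  have pb: "cinner p b = 0" by (simp add: p_def cinner_diff_left cinner_smult_left xb cinner_self \<beta>_def)
  have bp: "cinner b p = 0" using pb cinner_commute[of p b] by simp
  have pn: "(norm p)\<^sup>2 = (norm x)\<^sup>2 - (cmod al)\<^sup>2 * \<beta>"
  proof -
    have e1: "(norm p)\<^sup>2 = (norm x)\<^sup>2 + (cmod al)\<^sup>2 * \<beta> - 2 * Re (cinner x (al *s b))"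
      by (simp add: p_def norm_diff_sq norm_smult_vec power_mult_distrib \<beta>_def)
    have aa: "cnj al * al = complex_of_real ((cmod al)\<^sup>2)" by (metis complex_norm_square mult.commute)
    have e2: "cinner x (al *s b) = complex_of_real ((cmod al)\<^sup>2 * \<beta>)"
      by (simp add: cinner_smult_right xb aa mult.assoc[symmetric])
    show ?thesis using e1 e2 by simp
  qed
  have Nn: "(norm ((1 - al) *s b - s *s p))\<^sup>2 = (cmod (1 - al))\<^sup>2 * \<beta> + (1 - \<beta>) * ((norm x)\<^sup>2 - (cmod al)\<^sup>2 * \<beta>)"
  proof -
    have c0: "cinner ((1 - al) *s b) (s *s p) = 0" by (simp only: cinner_smult_left cinner_smult_right bp) simp
    have "(norm ((1 - al) *s b - s *s p))\<^sup>2 = (norm ((1 - al) *s b))\<^sup>2 + (norm (s *s p))\<^sup>2"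
      using norm_diff_sq[of "(1 - al) *s b" "s *s p"] c0 by simp
    also have "\<dots> = (cmod (1 - al))\<^sup>2 * \<beta> + (cmod s)\<^sup>2 * (norm p)\<^sup>2"
      by (simp only: norm_smult_vec power_mult_distrib \<beta>_def)
    finally show ?thesis by (simp add: ss pn)
  qed
  have D: "1 - cinner x b \<noteq> 0" using one_minus_cinner_nz[OF x b] .
  have "(norm (phi b x))\<^sup>2 = (cmod (1 / (1 - cinner x b)) * norm ((1 - al) *s b - s *s p))\<^sup>2"
    by (simp only: phi_def al_def[symmetric] s_def[symmetric] p_def[symmetric] norm_smult_vec)
  also have "\<dots> = (norm ((1 - al) *s b - s *s p))\<^sup>2 / (cmod (1 - cinner x b))\<^sup>2"
    by (simp add: power_mult_distrib norm_divide power_divide)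
  also have "\<dots> = ((cmod (1 - cinner x b))\<^sup>2 - (1 - \<beta>) * (1 - (norm x)\<^sup>2)) / (cmod (1 - cinner x b))\<^sup>2"
  proof -
    have "(cmod (1 - cinner x b))\<^sup>2 - ((cmod (1 - al))\<^sup>2 * \<beta> + (1 - \<beta>) * ((norm x)\<^sup>2 - (cmod al)\<^sup>2 * \<beta>)) = (1 - \<beta>) * (1 - (norm x)\<^sup>2)"
      using alg1[of al \<beta> "(norm x)\<^sup>2"] by (simp only: xb)
    then have "(norm ((1 - al) *s b - s *s p))\<^sup>2 = (cmod (1 - cinner x b))\<^sup>2 - (1 - \<beta>) * (1 - (norm x)\<^sup>2)"
      using Nn by linarith
    then show ?thesis by (simp only:)
  qed
  finally show ?thesis using D by (simp add: \<beta>_def field_simps)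
qed

lemma phi_in: "norm b < 1 \<Longrightarrow> norm x < 1 \<Longrightarrow> norm (phi b x) < 1"
proof -
  assume b: "norm b < 1" and x: "norm x < 1"
  have "0 < (1 - (norm b)\<^sup>2) * (1 - (norm x)\<^sup>2) / (cmod (1 - cinner x b))\<^sup>2"
    using b x one_minus_cinner_nz[OF x b] by (simp add: abs_square_less_1)
  then have "(norm (phi b x))\<^sup>2 < 1" using phi_norm[OF b x] by linarith
  then show ?thesis by (simp add: abs_square_less_1)
qed

lemma alg2: fixes p q :: complex
  shows "(cmod (1 - cnj p * q))\<^sup>2 - (cmod (q - p))\<^sup>2 = (1 - (cmod p)\<^sup>2) * (1 - (cmod q)\<^sup>2)"
  by (simp only: cmod_power2) (simp add: algebra_simps power2_eq_square)


lemma moeb_in: assumes m: "norm m < 1" and v: "norm (v::complex) < 1"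
  shows "norm ((v + m)/(1 + cnj m * v)) < 1"
proof -
  have "cmod (cnj m * v) < 1" using m v by (simp add: norm_mult lt1mult)
  then have D: "1 + cnj m * v \<noteq> 0"
    by (rule one_plus_nz)
  have "(cmod (1 + cnj m * v))\<^sup>2 - (cmod (v + m))\<^sup>2 = (1 - (cmod m)\<^sup>2) * (1 - (cmod v)\<^sup>2)"
    using alg2[of "-m" v] by simp
  moreover have "0 < (1 - (cmod m)\<^sup>2) * (1 - (cmod v)\<^sup>2)" using m v by (simp add: abs_square_less_1)
  ultimately have "(cmod (v + m))\<^sup>2 < (cmod (1 + cnj m * v))\<^sup>2" by linarith
  then have "cmod (v + m) < cmod (1 + cnj m * v)" by (simp add: power_less_imp_less_base)
  then show ?thesis using D by (simp add: norm_divide divide_less_eq)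
qed

lemma SP_disc:
  fixes H :: "complex \<Rightarrow> complex^'n"
  assumes hol: "\<And>v. (\<lambda>z. cinner (H z) v) holomorphic_on ball 0 1"
    and inb: "\<And>z. norm z < 1 \<Longrightarrow> norm (H z) < 1"
    and l: "norm l < 1" and m: "norm m < 1"
  shows "(1 - (cmod l)\<^sup>2) * (1 - (cmod m)\<^sup>2) / (cmod (1 - cnj m * l))\<^sup>2 \<le> 1 - (norm (phi (H m) (H l)))\<^sup>2"
proof -
  define b where "b = H m"
  define x where "x = H l"
  define y where "y = phi b x"
  define \<nu>0 where "\<nu>0 = (l - m)/(1 - cnj m * l)"
  define mm where "mm = (\<lambda>\<nu>. (\<nu> + m)/(1 + cnj m * \<nu>))"
  have bin: "norm b < 1" using inb m by (simp add: b_def)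
  have "cmod (cnj m * l) < 1" using m l by (simp add: norm_mult lt1mult)
  then have D0: "1 - cnj m * l \<noteq> 0" by auto
  have mm1: "1 - cnj m * m \<noteq> 0"
  proof -
    have "cnj m * m = complex_of_real ((cmod m)\<^sup>2)" by (metis complex_norm_square mult.commute)
    moreover have "(cmod m)\<^sup>2 < 1" using m by (simp add: abs_square_less_1)
    ultimately show ?thesis by (metis less_irrefl of_real_1 of_real_eq_iff right_minus_eq)
  qed
  have nu0: "1 - (cmod \<nu>0)\<^sup>2 = (1 - (cmod l)\<^sup>2) * (1 - (cmod m)\<^sup>2) / (cmod (1 - cnj m * l))\<^sup>2"
  proof -
    have "(cmod (1 - cnj m * l))\<^sup>2 - (cmod (l - m))\<^sup>2 = (1 - (cmod m)\<^sup>2) * (1 - (cmod l)\<^sup>2)"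
      using alg2[of m l] by simp
    then show ?thesis using D0 by (simp add: \<nu>0_def norm_divide power_divide field_simps)
  qed
  have e1: "\<nu>0 + m = l * (1 - cnj m * m) / (1 - cnj m * l)"
    using D0 by (simp add: \<nu>0_def field_simps)
  have e2: "1 + cnj m * \<nu>0 = (1 - cnj m * m) / (1 - cnj m * l)"
    using D0 by (simp add: \<nu>0_def field_simps)
  have mmnu0: "mm \<nu>0 = l" using D0 mm1 by (simp add: mm_def e1 e2)
  have mm0: "mm 0 = m" by (simp add: mm_def)
  have mmin: "\<And>\<nu>. norm \<nu> < 1 \<Longrightarrow> norm (mm \<nu>) < 1" using moeb_in[OF m] by (simp add: mm_def)
  have mmD: "\<And>\<nu>. norm \<nu> < 1 \<Longrightarrow> 1 + cnj m * \<nu> \<noteq> 0"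
  proof -
    fix \<nu> :: complex assume "norm \<nu> < 1"
    then have "cmod (cnj m * \<nu>) < 1" using m by (simp add: norm_mult lt1mult)
    then show "1 + cnj m * \<nu> \<noteq> 0"
      by (rule one_plus_nz)
  qed
  have mmhol: "mm holomorphic_on ball 0 1"
    unfolding mm_def by (intro holomorphic_intros) (use mmD in auto)
  have mmball: "mm ` ball 0 1 \<subseteq> ball 0 1" using mmin by auto
  have Ahol: "\<And>v. (\<lambda>\<nu>. cinner (H (mm \<nu>)) v) holomorphic_on ball 0 1"
  proof -
    fix v
    have "((\<lambda>z. cinner (H z) v) \<circ> mm) holomorphic_on ball 0 1"
      by (rule holomorphic_on_compose_gen[OF mmhol hol mmball])
    then show "(\<lambda>\<nu>. cinner (H (mm \<nu>)) v) holomorphic_on ball 0 1" by (simp add: o_def)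
  qed
  have nu0in: "norm \<nu>0 < 1"
  proof -
    have "0 < (1 - (cmod l)\<^sup>2) * (1 - (cmod m)\<^sup>2) / (cmod (1 - cnj m * l))\<^sup>2"
      using l m D0 by (simp add: abs_square_less_1)
    then have "(cmod \<nu>0)\<^sup>2 < 1" using nu0 by linarith
    then show ?thesis by (simp add: abs_square_less_1)
  qed
  have yle: "norm y \<le> cmod \<nu>0"
  proof (cases "y = 0")
    case True then show ?thesis by simp
  next
    case False
    define ny where "ny = norm y"
    have ny0: "ny > 0" using False by (simp add: ny_def)
    define g where "g = (\<lambda>\<nu>. cinner (phi b (H (mm \<nu>))) y / complex_of_real ny)"
    have geq: "g = (\<lambda>\<nu>. ((1 - cinner (H (mm \<nu>)) b * inverse (cinner b b)) * cinner b y
          - psq b * (cinner (H (mm \<nu>)) y - cinner (H (mm \<nu>)) b * inverse (cinner b b) * cinner b y))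
          / (1 - cinner (H (mm \<nu>)) b) / complex_of_real ny)"
      by (simp add: g_def phi_inner pal_def divide_inverse)
    have den: "\<And>\<nu>. \<nu> \<in> ball 0 1 \<Longrightarrow> 1 - cinner (H (mm \<nu>)) b \<noteq> 0"
      using one_minus_cinner_nz inb mmin bin by auto
    have ghol: "g holomorphic_on ball 0 1"
      unfolding geq
      by (intro holomorphic_intros Ahol) (use den ny0 in auto)
    have g0: "g 0 = 0" by (simp add: g_def mm0 b_def[symmetric] phi_self)
    have gin: "\<And>z. norm z < 1 \<Longrightarrow> norm (g z) < 1"
    proof -
      fix z :: complex assume z: "norm z < 1"
      have "cmod (cinner (phi b (H (mm z))) y) \<le> norm (phi b (H (mm z))) * ny"
        using cinner_CS by (simp add: ny_def)
      also have "\<dots> < 1 * ny"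
        using phi_in[OF bin inb[OF mmin[OF z]]] ny0 by (intro mult_strict_right_mono) auto
      finally show "norm (g z) < 1" using ny0 by (simp add: g_def norm_divide divide_less_eq)
    qed
    have "norm (g \<nu>0) \<le> norm \<nu>0" by (rule Schwarz_Lemma(1)[OF ghol g0 gin nu0in])
    moreover have "g \<nu>0 = complex_of_real ny"
      using ny0 by (simp add: g_def mmnu0 x_def[symmetric] y_def[symmetric] cinner_self ny_def power2_eq_square)
    ultimately show ?thesis using ny0 by (simp add: ny_def)
  qed
  have "(norm (phi (H m) (H l)))\<^sup>2 \<le> (cmod \<nu>0)\<^sup>2" using yle by (simp add: y_def b_def x_def power_mono)
  then show ?thesis using nu0 by linarith
qed



definition Qb :: "complex^'n \<Rightarrow> complex^'n \<Rightarrow> real" where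
  "Qb Z W = (1 - (norm Z)\<^sup>2) * (1 - (norm W)\<^sup>2) / (cmod (1 - cinner Z W))\<^sup>2"

lemma SP_disc':
  fixes H :: "complex \<Rightarrow> complex^'n"
  assumes hol: "\<And>v. (\<lambda>z. cinner (H z) v) holomorphic_on ball 0 1"
    and inb: "\<And>z. norm z < 1 \<Longrightarrow> norm (H z) < 1"
    and l: "norm l < 1" and m: "norm m < 1"
  shows "(1 - (cmod l)\<^sup>2) * (1 - (cmod m)\<^sup>2) / (cmod (1 - cnj m * l))\<^sup>2 \<le> Qb (H l) (H m)"
  using SP_disc[OF hol inb l m] phi_norm[OF inb[OF m] inb[OF l]]
  by (simp add: Qb_def mult.commute)

lemma bl_smult: "bounded_linear (\<lambda>h::complex. h *s (w::complex^'n))"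
proof (rule bounded_linear_intro[where K="norm w"])
  show "\<And>x y. (x + y) *s w = x *s w + y *s w" by (rule vector_sadd_rdistrib)
  show "\<And>r x. (r *\<^sub>R x) *s w = r *\<^sub>R (x *s w)" by (simp add: vec_eq_iff mult_scaleR_left)
  show "\<And>x. norm (x *s w) \<le> norm x * norm w" by (simp add: norm_smult_vec)
qed

lemma bl_cinner: "bounded_linear (\<lambda>x. cinner x v)"
  unfolding cinner_def
  by (intro bounded_linear_sum bounded_linear_compose[OF bounded_linear_mult_left] bounded_linear_vec_nth)

lemma hol_slice:
  assumes F: "holo_on unit_ball F"
    and inb: "\<And>l. norm l < 1 \<Longrightarrow> c + (complex_of_real r * l) *s u \<in> unit_ball"
  shows "(\<lambda>l. cinner (F (c + (complex_of_real r * l) *s u)) v) holomorphic_on ball 0 1"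
proof -
  define w where "w = complex_of_real r *s u"
  define \<psi> where "\<psi> = (\<lambda>l. c + l *s w)"
  have psi_eq: "\<And>l. c + (complex_of_real r * l) *s u = \<psi> l"
    by (simp add: \<psi>_def w_def vector_smult_assoc mult.commute)
  have "\<forall>l\<in>ball 0 1. \<exists>f'. ((\<lambda>l. cinner (F (\<psi> l)) v) has_field_derivative f') (at l)"
  proof
    fix l :: complex assume l: "l \<in> ball 0 1"
    then have "\<psi> l \<in> unit_ball" using inb psi_eq by auto
    then obtain L where L: "(F has_derivative L) (at (\<psi> l))" and hom: "\<And>c z. L (c *s z) = c *s L z"
      using F unfolding holo_on_def by blast
    have d1: "(\<psi> has_derivative (\<lambda>h. h *s w)) (at l)"
      unfolding \<psi>_def
      using has_derivative_add[OF has_derivative_const bounded_linear_imp_has_derivative[OF bl_smult]]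
      by simp
    have d2: "((\<lambda>x. cinner x v) has_derivative (\<lambda>x. cinner x v)) (at (F (\<psi> l)))"
      by (rule bounded_linear_imp_has_derivative[OF bl_cinner])
    have "(((\<lambda>x. cinner x v) \<circ> (F \<circ> \<psi>)) has_derivative ((\<lambda>x. cinner x v) \<circ> (L \<circ> (\<lambda>h. h *s w)))) (at l)"
      by (rule diff_chain_at[OF diff_chain_at[OF d1 L[unfolded o_def]]]) (use d2 in \<open>simp add: o_def\<close>)
    moreover have "((\<lambda>x. cinner x v) \<circ> (L \<circ> (\<lambda>h. h *s w))) = (\<lambda>h. cinner (L w) v * h)"
      by (rule ext) (simp add: hom cinner_smult_left mult.commute)
    ultimately have "((\<lambda>l. cinner (F (\<psi> l)) v) has_derivative (\<lambda>h. cinner (L w) v * h)) (at l)"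
      by (simp add: o_def)
    then show "\<exists>f'. ((\<lambda>l. cinner (F (\<psi> l)) v) has_field_derivative f') (at l)"
      unfolding has_field_derivative_def by blast
  qed
  then show ?thesis by (simp add: holomorphic_on_open psi_eq)
qed



lemma Qb_self: "norm Z < 1 \<Longrightarrow> Qb Z Z = 1"
proof -
  assume Z: "norm Z < 1"
  have "(norm Z)\<^sup>2 < 1" using Z by (simp add: abs_square_less_1)
  have "1 - cinner Z Z = complex_of_real (1 - (norm Z)\<^sup>2)" by (simp add: cinner_self)
  then have "cmod (1 - cinner Z Z) = 1 - (norm Z)\<^sup>2"
    by (simp only: norm_of_real) (use \<open>(norm Z)\<^sup>2 < 1\<close> in simp)
  then show ?thesis using \<open>(norm Z)\<^sup>2 < 1\<close> by (simp add: Qb_def power2_eq_square)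
qed

lemma cancel_sq: "(k::real) \<noteq> 0 \<Longrightarrow> (k * A) * (k * B) / (k\<^sup>2 * C) = A * B / C"
proof -
  assume k: "k \<noteq> 0"
  have e: "(k * A) * (k * B) = k\<^sup>2 * (A * B)" by (simp add: power2_eq_square mult_ac)
  have "k\<^sup>2 \<noteq> 0" using k by simp
  then show ?thesis unfolding e by (rule mult_divide_mult_cancel_left)
qed

lemma SP_ball:
  assumes f: "analytic_selfmap_ball F" and Z: "Z \<in> unit_ball" and W: "W \<in> unit_ball"
  shows "Qb Z W \<le> Qb (F Z) (F W)"
proof (cases "Z = W")
  case True
  have "F Z \<in> unit_ball" using f Z by (auto simp: analytic_selfmap_ball_def)
  then show ?thesis using True Z by (simp add: Qb_self unit_ball_def)
next
  case False
  have hol: "holo_on unit_ball F" and FB: "\<And>X. X \<in> unit_ball \<Longrightarrow> F X \<in> unit_ball"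
    using f by (auto simp: analytic_selfmap_ball_def)
  define d where "d = Z - W"
  define nd where "nd = norm d"
  have nd0: "nd > 0" using False by (simp add: nd_def d_def)
  define u where "u = complex_of_real (1/nd) *s d"
  have uu: "cinner u u = 1"
  proof -
    have "cinner u u = (complex_of_real (1/nd) * cnj (complex_of_real (1/nd))) * cinner d d"
      by (simp only: u_def cinner_smult_left cinner_smult_right mult_ac)
    also have "cinner d d = complex_of_real (nd\<^sup>2)" by (simp add: cinner_self nd_def)
    finally show ?thesis using nd0 by (simp add: power2_eq_square)
  qed
  have nu: "(norm u)\<^sup>2 = 1" using uu cinner_self_Re[of u] by simp
  have dnu: "d = complex_of_real nd *s u"
    using nd0 by (simp add: u_def vector_smult_assoc)
  define cW where "cW = cinner W u"
  define c where "c = W - cW *s u"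
  have cu: "cinner c u = 0" by (simp add: c_def cinner_diff_left cinner_smult_left uu cW_def)
  have uc: "cinner u c = 0" using cu cinner_commute[of c u] by simp
  have Wc: "W = c + cW *s u" by (simp add: c_def)
  have nW: "(norm W)\<^sup>2 = (norm c)\<^sup>2 + (cmod cW)\<^sup>2"
    using norm_add_sq[of c "cW *s u"] by (simp add: Wc[symmetric] norm_smult_vec power_mult_distrib nu cinner_smult_right cu)
  have Wlt: "(norm W)\<^sup>2 < 1" using W by (simp add: unit_ball_def abs_square_less_1)
  have "0 \<le> (cmod cW)\<^sup>2" by simp
  then have c1: "(norm c)\<^sup>2 < 1" using nW Wlt by linarith
  define r where "r = sqrt (1 - (norm c)\<^sup>2)"
  have r0: "r > 0" using c1 by (simp add: r_def)
  have r2: "r\<^sup>2 = 1 - (norm c)\<^sup>2" using c1 by (simp add: r_def)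
  define \<psi> where "\<psi> = (\<lambda>l. c + (complex_of_real r * l) *s u)"
  have ipsi: "\<And>l m. cinner (\<psi> l) (\<psi> m) = complex_of_real ((norm c)\<^sup>2) + complex_of_real (r\<^sup>2) * (l * cnj m)"
  proof -
    fix l m
    have "cinner (\<psi> l) (\<psi> m) = cinner c c + cnj (complex_of_real r * m) * cinner c u + (complex_of_real r * l) * cinner u c
        + (complex_of_real r * l) * (cnj (complex_of_real r * m) * cinner u u)"
      by (simp only: \<psi>_def cinner_add_left cinner_add_right cinner_smult_left cinner_smult_right) (simp add: algebra_simps)
    also have "\<dots> = complex_of_real ((norm c)\<^sup>2) + complex_of_real (r\<^sup>2) * (l * cnj m)"
      by (simp add: cu uc uu cinner_self[of c] power2_eq_square)
    finally show "cinner (\<psi> l) (\<psi> m) = complex_of_real ((norm c)\<^sup>2) + complex_of_real (r\<^sup>2) * (l * cnj m)" .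
  qed
  have npsi: "\<And>l. (norm (\<psi> l))\<^sup>2 = (norm c)\<^sup>2 + r\<^sup>2 * (cmod l)\<^sup>2"
  proof -
    fix l
    have ll: "l * cnj l = complex_of_real ((cmod l)\<^sup>2)" by (rule complex_norm_square[symmetric])
    have "(norm (\<psi> l))\<^sup>2 = Re (cinner (\<psi> l) (\<psi> l))" by (simp add: cinner_self_Re)
    also have "\<dots> = Re (complex_of_real ((norm c)\<^sup>2) + complex_of_real (r\<^sup>2) * complex_of_real ((cmod l)\<^sup>2))"
      by (simp only: ipsi ll)
    also have "\<dots> = (norm c)\<^sup>2 + r\<^sup>2 * (cmod l)\<^sup>2"
      by (simp only: of_real_mult[symmetric] of_real_add[symmetric] Re_complex_of_real)
    finally show "(norm (\<psi> l))\<^sup>2 = (norm c)\<^sup>2 + r\<^sup>2 * (cmod l)\<^sup>2" .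
  qed
  have psi_in: "\<And>l. norm l < 1 \<Longrightarrow> \<psi> l \<in> unit_ball"
  proof -
    fix l :: complex assume l: "norm l < 1"
    have "(cmod l)\<^sup>2 < 1" using l by (simp add: abs_square_less_1)
    then have "r\<^sup>2 * (cmod l)\<^sup>2 < r\<^sup>2" using r0 by simp
    then have "(norm (\<psi> l))\<^sup>2 < 1" using npsi[of l] r2 by linarith
    then show "\<psi> l \<in> unit_ball" by (simp add: unit_ball_def abs_square_less_1)
  qed
  have Qpsi: "\<And>l m. Qb (\<psi> l) (\<psi> m) = (1 - (cmod l)\<^sup>2) * (1 - (cmod m)\<^sup>2) / (cmod (1 - cnj m * l))\<^sup>2"
  proof -
    fix l m
    have e1: "1 - cinner (\<psi> l) (\<psi> m) = complex_of_real (r\<^sup>2) * (1 - cnj m * l)"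
    proof -
      have "1 - cinner (\<psi> l) (\<psi> m) = complex_of_real (1 - (norm c)\<^sup>2) - complex_of_real (r\<^sup>2) * (l * cnj m)"
        by (simp add: ipsi)
      also have "\<dots> = complex_of_real (r\<^sup>2) * (1 - cnj m * l)"
        by (simp only: r2[symmetric]) (simp add: algebra_simps)
      finally show ?thesis .
    qed
    have e2: "\<And>l. 1 - (norm (\<psi> l))\<^sup>2 = r\<^sup>2 * (1 - (cmod l)\<^sup>2)"
    proof -
      fix l
      have "(norm (\<psi> l))\<^sup>2 = (norm c)\<^sup>2 + r\<^sup>2 * (cmod l)\<^sup>2" by (rule npsi)
      then show "1 - (norm (\<psi> l))\<^sup>2 = r\<^sup>2 * (1 - (cmod l)\<^sup>2)" using r2 by (simp add: right_diff_distrib)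
    qed
    show "Qb (\<psi> l) (\<psi> m) = (1 - (cmod l)\<^sup>2) * (1 - (cmod m)\<^sup>2) / (cmod (1 - cnj m * l))\<^sup>2"
    proof -
      have rr: "cmod (complex_of_real (r\<^sup>2)) = r\<^sup>2" by (simp only: norm_of_real) simp
      show ?thesis unfolding Qb_def e1 e2 norm_mult power_mult_distrib rr
        by (rule cancel_sq) (use r0 in simp)
    qed
  qed
  define lW where "lW = cW / complex_of_real r"
  define cZ where "cZ = cinner Z u"
  define lZ where "lZ = cZ / complex_of_real r"
  have psiW: "\<psi> lW = W" using r0 by (simp add: \<psi>_def lW_def Wc)
  have cZ: "cZ = cW + complex_of_real nd"
  proof -
    have "Z = W + d" by (simp add: d_def)
    then show ?thesis by (simp add: cZ_def cW_def cinner_add_left dnu cinner_smult_left uu)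
  qed
  have psiZ: "\<psi> lZ = Z"
  proof -
    have "\<psi> lZ = c + cZ *s u" using r0 by (simp add: \<psi>_def lZ_def)
    also have "\<dots> = W + complex_of_real nd *s u" by (simp add: cZ c_def vector_sadd_rdistrib)
    finally show ?thesis by (simp add: dnu[symmetric] d_def)
  qed
  have lin: "\<And>l. \<psi> l \<in> unit_ball \<Longrightarrow> norm l < 1"
  proof -
    fix l assume "\<psi> l \<in> unit_ball"
    then have "(norm (\<psi> l))\<^sup>2 < 1" by (simp add: unit_ball_def abs_square_less_1)
    then have "r\<^sup>2 * (cmod l)\<^sup>2 < r\<^sup>2 * 1" using npsi[of l] r2 by linarith
    then have "(cmod l)\<^sup>2 < 1" using r0 by (simp add: mult_less_cancel_left_pos)
    then show "norm l < 1" by (simp add: abs_square_less_1)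
  qed
  have lWin: "norm lW < 1" using lin psiW W by simp
  have lZin: "norm lZ < 1" using lin psiZ Z by simp
  have Hhol: "\<And>v. (\<lambda>l. cinner (F (\<psi> l)) v) holomorphic_on ball 0 1"
    unfolding \<psi>_def by (rule hol_slice[OF hol]) (use psi_in in \<open>simp add: \<psi>_def\<close>)
  have Hin: "\<And>l. norm l < 1 \<Longrightarrow> norm (F (\<psi> l)) < 1"
    using FB psi_in by (simp add: unit_ball_def)
  have "Qb Z W = (1 - (cmod lZ)\<^sup>2) * (1 - (cmod lW)\<^sup>2) / (cmod (1 - cnj lW * lZ))\<^sup>2"
    using Qpsi[of lZ lW] psiZ psiW by simp
  also have "\<dots> \<le> Qb (F (\<psi> lZ)) (F (\<psi> lW))"
    by (rule SP_disc'[where H="\<lambda>l. F (\<psi> l)", OF Hhol Hin lZin lWin])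
  finally show ?thesis using psiZ psiW by simp
qed



lemma geo_step:
  fixes x :: "nat \<Rightarrow> 'a::real_normed_vector" and T :: "nat \<Rightarrow> real"
  assumes ev: "\<And>k. k \<ge> N \<Longrightarrow> T (Suc k) \<le> r * T k \<and> norm (x k - x (Suc k)) \<le> \<eta> * T k"
    and r0: "0 \<le> r" and eta: "0 \<le> \<eta>" and n: "n \<ge> N" and Tpos: "\<And>k. T k > 0"
  shows "norm (x n - x (n + m)) \<le> \<eta> * T n * (\<Sum>j<m. r ^ j) \<and> T (n + m) \<le> r ^ m * T n"
proof (induction m)
  case 0 then show ?case by simp
next
  case (Suc m)
  have k: "n + m \<ge> N" using n by simp
  have "norm (x n - x (n + Suc m)) \<le> norm (x n - x (n + m)) + norm (x (n + m) - x (Suc (n + m)))"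
    by (metis add_Suc_right norm_triangle_sub diff_add_cancel norm_triangle_ineq order_refl
        add_diff_cancel_right' diff_diff_eq2 dist_norm dist_triangle)
  also have "\<dots> \<le> \<eta> * T n * (\<Sum>j<m. r ^ j) + \<eta> * T (n + m)"
    using Suc.IH ev[OF k] by linarith
  also have "\<eta> * T (n + m) \<le> \<eta> * (r ^ m * T n)"
    using Suc.IH eta by (simp add: mult_left_mono)
  finally have A: "norm (x n - x (n + Suc m)) \<le> \<eta> * T n * (\<Sum>j<Suc m. r ^ j)"
    by (simp add: algebra_simps)
  have "T (n + Suc m) \<le> r * T (n + m)" using ev[OF k] by simp
  also have "\<dots> \<le> r * (r ^ m * T n)" using Suc.IH r0 by (simp add: mult_left_mono)
  finally show ?case using A by simp
qed

lemma geo: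
  fixes x :: "nat \<Rightarrow> 'a::real_normed_vector" and T :: "nat \<Rightarrow> real"
  assumes x0: "x \<longlonglongrightarrow> 0" and Tpos: "\<And>n. T n > 0"
    and Tr: "eventually (\<lambda>n. T (Suc n) \<le> r * T n) sequentially"
    and r0: "0 \<le> r" and r1: "r < 1"
    and dx: "(\<lambda>n. norm (x n - x (Suc n)) / T n) \<longlonglongrightarrow> 0"
  shows "(\<lambda>n. norm (x n) / T n) \<longlonglongrightarrow> 0"
proof (rule tendstoI)
  fix e :: real assume e: "e > 0"
  define \<eta> where "\<eta> = e * (1 - r) / 2"
  have eta: "\<eta> > 0" using e r1 by (simp add: \<eta>_def)
  have "eventually (\<lambda>n. dist (norm (x n - x (Suc n)) / T n) 0 < \<eta>) sequentially"
    using tendstoD[OF dx eta] .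
  then have "eventually (\<lambda>n. norm (x n - x (Suc n)) \<le> \<eta> * T n) sequentially"
    by eventually_elim (use Tpos in \<open>auto simp: divide_less_eq less_imp_le\<close>)
  with Tr have "eventually (\<lambda>n. T (Suc n) \<le> r * T n \<and> norm (x n - x (Suc n)) \<le> \<eta> * T n) sequentially"
    by eventually_elim auto
  then obtain N where N: "\<And>k. k \<ge> N \<Longrightarrow> T (Suc k) \<le> r * T k \<and> norm (x k - x (Suc k)) \<le> \<eta> * T k"
    unfolding eventually_sequentially by blast
  have "eventually (\<lambda>n. dist (norm (x n) / T n) 0 < e) sequentially"
    unfolding eventually_sequentially
  proof (intro exI allI impI)
    fix n assume n: "n \<ge> N"
    have geo_sum: "\<And>m. (\<Sum>j<m. r ^ j) \<le> 1 / (1 - r)"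
    proof -
      fix m
      have "(\<Sum>j<m. r ^ j) = (1 - r ^ m) / (1 - r)"
        using r1 by (simp add: sum_gp_strict)
      also have "\<dots> \<le> 1 / (1 - r)" using r0 r1 by (simp add: divide_right_mono)
      finally show "(\<Sum>j<m. r ^ j) \<le> 1 / (1 - r)" .
    qed
    have bnd: "\<And>m. norm (x n - x (n + m)) \<le> \<eta> * T n / (1 - r)"
    proof -
      fix m
      have "norm (x n - x (n + m)) \<le> \<eta> * T n * (\<Sum>j<m. r ^ j)"
        using geo_step[where N=N and T=T and r=r and x=x and \<eta>=\<eta> and n=n and m=m, OF N r0 _ n Tpos] eta by auto
      also have "\<dots> \<le> \<eta> * T n * (1 / (1 - r))"
        using geo_sum eta Tpos[of n] by (intro mult_left_mono) auto
      finally show "norm (x n - x (n + m)) \<le> \<eta> * T n / (1 - r)" by simp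
    qed
    have xs: "(\<lambda>m. x (n + m)) \<longlonglongrightarrow> 0"
      using LIMSEQ_ignore_initial_segment[OF x0, of n] by (simp add: add.commute)
    have lim: "(\<lambda>m. norm (x n - x (n + m))) \<longlonglongrightarrow> norm (x n - 0)"
      by (intro tendsto_intros xs)
    have "norm (x n) \<le> \<eta> * T n / (1 - r)"
      using tendsto_le[OF trivial_limit_sequentially tendsto_const lim] bnd by simp
    then have "norm (x n) / T n \<le> \<eta> / (1 - r)" using Tpos[of n] r1 by (simp add: divide_simps mult.commute)
    also have "\<eta> / (1 - r) = e / 2" using r1 by (simp add: \<eta>_def field_simps)
    also have "e / 2 < e" using e by simp
    finally show "dist (norm (x n) / T n) 0 < e" using Tpos[of n] by simp
  qed
  then show "eventually (\<lambda>n. dist (norm (x n) / T n) 0 < e) sequentially" .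
qed

lemma cinner_tendsto: "W \<longlonglongrightarrow> q \<Longrightarrow> (\<lambda>n. cinner Y (W n)) \<longlonglongrightarrow> cinner Y q"
  unfolding cinner_def by (intro tendsto_intros tendsto_vec_nth)

lemma cinner_tendsto': "W \<longlonglongrightarrow> q \<Longrightarrow> (\<lambda>n. cinner (W n) Y) \<longlonglongrightarrow> cinner q Y"
  unfolding cinner_def by (intro tendsto_intros tendsto_vec_nth)

lemma julia_seq:
  fixes f :: "complex^'n \<Rightarrow> complex^'n" and Z :: "nat \<Rightarrow> complex^'n"
  assumes f: "analytic_selfmap_ball f" and rep: "boundary_repelling_fp f q \<alpha>"
    and Zin: "\<And>n. Z n \<in> unit_ball" and bwd: "\<And>n. f (Z (Suc n)) = Z n" and conv: "Z \<longlonglongrightarrow> q"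
    and eps: "\<epsilon> > 0"
  shows "eventually (\<lambda>n. (\<alpha> - \<epsilon>) * (1 - (norm (Z (Suc n)))\<^sup>2) \<le> 1 - (norm (Z n))\<^sup>2) sequentially"
proof (rule ccontr)
  define c where "c = \<alpha> - \<epsilon>"
  define s where "s = (\<lambda>n. 1 - (norm (Z n))\<^sup>2)"
  have spos: "\<And>n. s n > 0" using Zin by (simp add: s_def unit_ball_def abs_square_less_1)
  assume "\<not> eventually (\<lambda>n. (\<alpha> - \<epsilon>) * (1 - (norm (Z (Suc n)))\<^sup>2) \<le> 1 - (norm (Z n))\<^sup>2) sequentially"
  then have fr: "frequently (\<lambda>n. s n < c * s (Suc n)) sequentially"
    unfolding frequently_def c_def s_def by (simp add: not_less)
  then obtain n0 where "s n0 < c * s (Suc n0)" by (meson frequently_ex)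
  then have c0: "c > 0"
  proof (rule_tac ccontr)
    assume a: "s n0 < c * s (Suc n0)" "\<not> c > 0"
    then have "c * s (Suc n0) \<le> 0" using spos[of "Suc n0"] by (intro mult_nonpos_nonneg) auto
    then show False using a spos[of n0] by linarith
  qed
  have incl: "\<forall>R>0. f ` horo q R \<subseteq> horo q (c * R)"
  proof (intro allI impI subsetI)
    fix R :: real and Y assume R: "R > 0" and "Y \<in> f ` horo q R"
    then obtain X where X: "X \<in> horo q R" and Y: "Y = f X" by auto
    have Xb: "X \<in> unit_ball" and hX: "(cmod (1 - cinner X q))\<^sup>2 / (1 - (norm X)\<^sup>2) < R"
      using X by (auto simp: horo_def)
    have Yb: "Y \<in> unit_ball" using f Xb Y by (auto simp: analytic_selfmap_ball_def)
    define PX where "PX = 1 - (norm X)\<^sup>2"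
    define PY where "PY = 1 - (norm Y)\<^sup>2"
    have PX0: "PX > 0" using Xb by (simp add: PX_def unit_ball_def abs_square_less_1)
    have PY0: "PY > 0" using Yb by (simp add: PY_def unit_ball_def abs_square_less_1)
    define A where "A = (\<lambda>n. (cmod (1 - cinner Y (Z n)))\<^sup>2 / PY)"
    define B where "B = (\<lambda>n. (cmod (1 - cinner X (Z (Suc n))))\<^sup>2 / PX)"
    have Alim: "A \<longlonglongrightarrow> (cmod (1 - cinner Y q))\<^sup>2 / PY"
      unfolding A_def by (intro tendsto_intros cinner_tendsto conv) (use PY0 in simp)
    have Blim: "B \<longlonglongrightarrow> (cmod (1 - cinner X q))\<^sup>2 / PX"
      unfolding B_def by (intro tendsto_intros cinner_tendsto LIMSEQ_Suc conv) (use PX0 in simp)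
    have key: "\<And>n. s n < c * s (Suc n) \<Longrightarrow> A n \<le> c * B n"
    proof -
      fix n assume sn: "s n < c * s (Suc n)"
      have Q: "Qb X (Z (Suc n)) \<le> Qb Y (Z n)"
        using SP_ball[OF f Xb Zin[of "Suc n"]] by (simp add: Y bwd)
      define DX where "DX = (cmod (1 - cinner X (Z (Suc n))))\<^sup>2"
      define DY where "DY = (cmod (1 - cinner Y (Z n)))\<^sup>2"
      have DX0: "DX > 0" using one_minus_cinner_nz[of X "Z (Suc n)"] Xb Zin[of "Suc n"]
        by (simp add: DX_def unit_ball_def)
      have DY0: "DY > 0" using one_minus_cinner_nz[of Y "Z n"] Yb Zin[of n]
        by (simp add: DY_def unit_ball_def)
      have Q': "PX * s (Suc n) / DX \<le> PY * s n / DY"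
        using Q by (simp add: Qb_def PX_def PY_def DX_def DY_def s_def)
      then have "PX * s (Suc n) * DY \<le> PY * s n * DX"
        using DX0 DY0 by (simp add: divide_simps mult_ac)
      then have "DY / PY \<le> s n * DX / (s (Suc n) * PX)"
        using PX0 PY0 spos[of n] spos[of "Suc n"] by (simp add: divide_simps mult_ac)
      also have "\<dots> \<le> c * s (Suc n) * DX / (s (Suc n) * PX)"
        using sn DX0 PX0 spos[of "Suc n"] by (intro divide_right_mono mult_right_mono) auto
      also have "\<dots> = c * (DX / PX)" using spos[of "Suc n"] by (simp add: field_simps)
      finally show "A n \<le> c * B n" by (simp add: A_def B_def DX_def DY_def)
    qed
    show "Y \<in> horo q (c * R)"
    proof (rule ccontr)
      assume "Y \<notin> horo q (c * R)"
      then have hY: "(cmod (1 - cinner Y q))\<^sup>2 / PY \<ge> c * R"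
        using Yb by (auto simp: horo_def PY_def not_less)
      have "c * ((cmod (1 - cinner X q))\<^sup>2 / PX) < c * R"
        unfolding PX_def by (rule mult_strict_left_mono[OF hX c0])
      then have pos: "(cmod (1 - cinner Y q))\<^sup>2 / PY - c * ((cmod (1 - cinner X q))\<^sup>2 / PX) > 0"
        using hY by linarith
      have "(\<lambda>n. A n - c * B n) \<longlonglongrightarrow> (cmod (1 - cinner Y q))\<^sup>2 / PY - c * ((cmod (1 - cinner X q))\<^sup>2 / PX)"
        by (intro tendsto_intros Alim Blim)
      then have "eventually (\<lambda>n. A n - c * B n > 0) sequentially"
        using pos by (rule order_tendstoD)
      then have "eventually (\<lambda>n. \<not> (s n < c * s (Suc n))) sequentially"
        by eventually_elim (use key in force)
      then show False using fr by (simp add: frequently_def)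
    qed
  qed
  then have "\<alpha> \<le> c" using rep unfolding boundary_repelling_fp_def by blast
  then show False using eps by (simp add: c_def)
qed



lemma algD: fixes a b c :: complex
  assumes "1 + a \<noteq> 0" "1 + b \<noteq> 0"
  shows "(1 - a)/(1 + a) + (1 - b)/(1 + b) - 2 * ((1/(1 + a)) * (1/(1 + b)) * c) = 2 * (1 - (a * b + c)) / ((1 + a) * (1 + b))"
proof -
  have "(1 - a)/(1 + a) + (1 - b)/(1 + b) - 2 * ((1/(1 + a)) * (1/(1 + b)) * c)
     = ((1 - a) * (1 + b) + (1 - b) * (1 + a) - 2 * c) / ((1 + a) * (1 + b))"
    using assms by (simp add: divide_simps)
  also have "(1 - a) * (1 + b) + (1 - b) * (1 + a) - 2 * c = 2 * (1 - (a * b + c))"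
    by (simp add: algebra_simps)
  finally show ?thesis .
qed

lemma Re_cay: "Re ((1 - u)/(1 + u)) = (1 - (cmod u)\<^sup>2) / (cmod (1 + u))\<^sup>2"
  by (simp only: Re_divide cmod_power2) (simp add: algebra_simps power2_eq_square)
lemma Im_cay: "Im ((1 - u)/(1 + u)) = - 2 * Im u / (cmod (1 + u))\<^sup>2"
  by (simp only: Im_divide cmod_power2) (simp add: algebra_simps power2_eq_square)

lemma sqrt_le_sq: assumes "sqrt x \<le> a" "0 \<le> a" shows "x \<le> a\<^sup>2"
proof (cases "x < 0")
  case True
  have "0 \<le> a\<^sup>2" by simp
  then show ?thesis using True by linarith
next
  case False
  then have x0: "0 \<le> x" by simp
  have "(sqrt x)\<^sup>2 \<le> a\<^sup>2" using assms x0 by (intro power_mono) auto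
  then show ?thesis using x0 by simp
qed

lemma tendsto_sq_zero: "(\<lambda>n. (f n)\<^sup>2) \<longlonglongrightarrow> 0 \<Longrightarrow> (\<lambda>n. \<bar>f n :: real\<bar>) \<longlonglongrightarrow> 0"
proof -
  assume "(\<lambda>n. (f n)\<^sup>2) \<longlonglongrightarrow> 0"
  then have "(\<lambda>n. sqrt ((f n)\<^sup>2)) \<longlonglongrightarrow> sqrt 0" by (intro tendsto_intros)
  then show ?thesis by simp
qed

lemma squeeze0: "(\<And>n. 0 \<le> g n) \<Longrightarrow> (\<And>n. g n \<le> h n) \<Longrightarrow> h \<longlonglongrightarrow> 0 \<Longrightarrow> g \<longlonglongrightarrow> (0::real)"
  by (rule tendsto_sandwich[OF always_eventually always_eventually tendsto_const]) auto

lemma squeeze0_ev: "(\<And>n. 0 \<le> g n) \<Longrightarrow> eventually (\<lambda>n. g n \<le> h n) sequentially \<Longrightarrow> h \<longlonglongrightarrow> 0 \<Longrightarrow> g \<longlonglongrightarrow> (0::real)"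
  by (rule tendsto_sandwich[OF always_eventually _ tendsto_const]) auto

lemma cmod_one_cnj: "cmod (1 + cnj x) = cmod (1 + x)"
  by (metis complex_cnj_add complex_cnj_one complex_mod_cnj)

theorem mainTheorem7:
  fixes f :: "complex^'n \<Rightarrow> complex^'n"
    and i0 :: 'n
    and \<alpha> :: real
    and Z :: "nat \<Rightarrow> complex^'n"
  defines "e1 \<equiv> axis i0 (1::complex)"
  defines "a \<equiv> (\<alpha> - 1) / (\<alpha> + 1)"
  defines "zz \<equiv> (\<lambda>n. cayley_z i0 (Z n))"
  defines "ww \<equiv> (\<lambda>n. cayley_w i0 (Z n))"
  defines "t \<equiv> (\<lambda>n. Re (zz n) - (norm (ww n))\<^sup>2)"
  assumes f: "analytic_selfmap_ball f"
    and rep: "boundary_repelling_fp f e1 \<alpha>"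
    and Zin: "\<And>n. Z n \<in> unit_ball"
    and bwd: "\<And>n. f (Z (Suc n)) = Z n"
    and conv: "Z \<longlonglongrightarrow> e1"
    and dstep: "\<And>n. dB (Z n) (Z (Suc n)) \<le> a"
  shows "(\<lambda>n. Re (zz n) / t n) \<longlonglongrightarrow> 1 \<and>
    (\<lambda>n. Im (zz n) / t n) \<longlonglongrightarrow> 0 \<and>
    (\<lambda>n. (norm (ww n))\<^sup>2 / t n) \<longlonglongrightarrow> 0 \<and>
    (\<lambda>n. t n / t (Suc n)) \<longlonglongrightarrow> \<alpha> \<and>
    (\<lambda>n. (norm (Z n - cinner (Z n) e1 *s e1))\<^sup>2 / (1 - (cmod (cinner (Z n) e1))\<^sup>2)) \<longlonglongrightarrow> 0"
proof -
  have al1: "\<alpha> > 1" using rep by (simp add: boundary_repelling_fp_def)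
  define u where "u = (\<lambda>n. Z n $ i0)"
  define V where "V = (\<lambda>n. Z n - u n *s e1)"
  define s where "s = (\<lambda>n. 1 - (norm (Z n))\<^sup>2)"
  define q where "q = (\<lambda>n. (cmod (1 + u n))\<^sup>2)"
  have ee: "cinner e1 e1 = 1" by (simp add: e1_def cinner_axis)
  have "(norm e1)\<^sup>2 = 1" using cinner_self_Re[of e1] ee by simp
  then have "norm e1 = 1 \<or> norm e1 = -1" by (simp add: power2_eq_1_iff)
  then have ne1: "norm e1 = 1" using norm_ge_zero[of e1] by linarith
  have Ze: "\<And>n. cinner (Z n) e1 = u n" by (simp add: e1_def cinner_axis u_def)
  have Ve: "\<And>n. cinner (V n) e1 = 0" by (simp add: V_def cinner_diff_left cinner_smult_left Ze ee)
  have eV: "\<And>n. cinner e1 (V n) = 0" using Ve cinner_commute by (metis complex_cnj_zero)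
  have Zdec: "\<And>n. Z n = V n + u n *s e1" by (simp add: V_def)
  have nZ: "\<And>n. (norm (Z n))\<^sup>2 = (norm (V n))\<^sup>2 + (cmod (u n))\<^sup>2"
  proof -
    fix n
    have "(norm (V n + u n *s e1))\<^sup>2 = (norm (V n))\<^sup>2 + (cmod (u n))\<^sup>2"
      using norm_add_sq[of "V n" "u n *s e1"] by (simp add: norm_smult_vec ne1 cinner_smult_right Ve)
    then show "(norm (Z n))\<^sup>2 = (norm (V n))\<^sup>2 + (cmod (u n))\<^sup>2" using Zdec[of n] by simp
  qed
  have Zlt: "\<And>n. (norm (Z n))\<^sup>2 < 1" using Zin by (simp add: unit_ball_def abs_square_less_1)
  have spos: "\<And>n. s n > 0" using Zlt by (simp add: s_def)
  have u1: "\<And>n. cmod (u n) < 1"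
  proof -
    fix n
    have "(cmod (u n))\<^sup>2 < 1" using nZ[of n] Zlt[of n] by (smt (verit) zero_le_power2)
    then show "cmod (u n) < 1" by (simp add: abs_square_less_1)
  qed
  have up: "\<And>n. 1 + u n \<noteq> 0" using u1 one_plus_nz by blast
  have qpos: "\<And>n. q n > 0" using up by (simp add: q_def)
  have wweq: "\<And>n. ww n = (1 / (1 + u n)) *s V n"
    by (simp add: ww_def cayley_w_def V_def vec_eq_iff e1_def axis_def u_def)
  have zzeq: "\<And>n. zz n = (1 - u n) / (1 + u n)" by (simp add: zz_def cayley_z_def u_def)
  have nww: "\<And>n. (norm (ww n))\<^sup>2 = (norm (V n))\<^sup>2 / q n"
    by (simp add: wweq norm_smult_vec power_mult_distrib q_def norm_divide power_divide)
  have Rezz: "\<And>n. Re (zz n) = (1 - (cmod (u n))\<^sup>2) / q n" by (simp add: zzeq Re_cay q_def)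
  have Imzz: "\<And>n. Im (zz n) = - 2 * Im (u n) / q n" by (simp add: zzeq Im_cay q_def)
  have ht: "\<And>n. t n = s n / q n"
  proof -
    fix n
    show "t n = s n / q n" unfolding t_def Rezz nww s_def nZ using qpos[of n]
      by (simp add: field_simps)
  qed
  have tpos: "\<And>n. t n > 0" using spos qpos by (simp add: ht)
  have Rezz_t: "\<And>n. Re (zz n) = t n + (norm (ww n))\<^sup>2" by (simp add: t_def)
  have ulim: "u \<longlonglongrightarrow> 1"
  proof -
    have "(\<lambda>n. Z n $ i0) \<longlonglongrightarrow> e1 $ i0" by (intro tendsto_vec_nth conv)
    then show ?thesis by (simp add: u_def e1_def)
  qed
  have slim: "s \<longlonglongrightarrow> 0"
  proof -
    have "s \<longlonglongrightarrow> 1 - (norm e1)\<^sup>2" unfolding s_def by (intro tendsto_intros conv)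
    then show ?thesis by (simp add: ne1)
  qed
  have qlim: "q \<longlonglongrightarrow> 4"
  proof -
    have "q \<longlonglongrightarrow> (cmod (1 + 1))\<^sup>2" unfolding q_def by (intro tendsto_intros ulim)
    then show ?thesis by simp
  qed
  have tlim: "t \<longlonglongrightarrow> 0"
  proof -
    have "(\<lambda>n. s n / q n) \<longlonglongrightarrow> 0 / 4" by (intro tendsto_intros slim qlim) auto
    then show ?thesis by (simp add: ht[abs_def])
  qed
  have Vlim: "(\<lambda>n. (norm (V n))\<^sup>2) \<longlonglongrightarrow> 0"
  proof -
    have "(\<lambda>n. (norm (Z n))\<^sup>2 - (cmod (u n))\<^sup>2) \<longlonglongrightarrow> (norm e1)\<^sup>2 - (cmod 1)\<^sup>2"
      by (intro tendsto_intros conv ulim)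
    then show ?thesis by (simp add: nZ ne1)
  qed
  have wlim: "ww \<longlonglongrightarrow> 0"
  proof -
    have "(\<lambda>n. (norm (V n))\<^sup>2 / q n) \<longlonglongrightarrow> 0 / 4" by (intro tendsto_intros Vlim qlim) auto
    then have "(\<lambda>n. (norm (ww n))\<^sup>2) \<longlonglongrightarrow> 0" by (simp add: nww)
    then have "(\<lambda>n. \<bar>norm (ww n)\<bar>) \<longlonglongrightarrow> 0" by (rule tendsto_sq_zero)
    then show ?thesis by (simp add: tendsto_norm_zero_iff)
  qed
  have Imlim: "(\<lambda>n. Im (zz n)) \<longlonglongrightarrow> 0"
  proof -
    have "(\<lambda>n. - 2 * Im (u n) / q n) \<longlonglongrightarrow> - 2 * Im 1 / 4" by (intro tendsto_intros ulim qlim) auto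
    then show ?thesis by (simp add: Imzz)
  qed

  define K where "K = (\<alpha> + 1)\<^sup>2 / \<alpha>"
  define D where "D = (\<lambda>n. zz n + cnj (zz (Suc n)) - 2 * cinner (ww n) (ww (Suc n)))"
  have cZZ: "\<And>n m. cinner (Z n) (Z m) = u n * cnj (u m) + cinner (V n) (V m)"
  proof -
    fix n m
    have "cinner (Z n) (Z m) = cinner (V n + u n *s e1) (V m + u m *s e1)" using Zdec[of n] Zdec[of m] by simp
    also have "\<dots> = u n * cnj (u m) + cinner (V n) (V m)"
      by (simp only: cinner_add_left cinner_add_right cinner_smult_left cinner_smult_right Ve eV ee) (simp add: algebra_simps)
    finally show "cinner (Z n) (Z m) = u n * cnj (u m) + cinner (V n) (V m)" .
  qed
  have cww: "\<And>n m. cinner (ww n) (ww m) = (1/(1 + u n)) * (1/(1 + cnj (u m))) * cinner (V n) (V m)"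
    by (simp add: wweq cinner_smult_left cinner_smult_right)
  have Deq: "\<And>n. D n = 2 * (1 - cinner (Z n) (Z (Suc n))) / ((1 + u n) * (1 + cnj (u (Suc n))))"
  proof -
    fix n
    have c1: "1 + cnj (u (Suc n)) \<noteq> 0"
    proof
      assume "1 + cnj (u (Suc n)) = 0"
      then have "cmod (1 + u (Suc n)) = 0" using cmod_one_cnj[of "u (Suc n)"] by simp
      then show False using up[of "Suc n"] by simp
    qed
    have "D n = (1 - u n)/(1 + u n) + (1 - cnj (u (Suc n)))/(1 + cnj (u (Suc n)))
        - 2 * ((1/(1 + u n)) * (1/(1 + cnj (u (Suc n)))) * cinner (V n) (V (Suc n)))"
      unfolding D_def cww zzeq by simp
    also have "\<dots> = 2 * (1 - (u n * cnj (u (Suc n)) + cinner (V n) (V (Suc n)))) / ((1 + u n) * (1 + cnj (u (Suc n))))"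
      by (rule algD[OF up[of n] c1])
    finally show "D n = 2 * (1 - cinner (Z n) (Z (Suc n))) / ((1 + u n) * (1 + cnj (u (Suc n))))"
      by (simp add: cZZ)
  qed
  have nD: "\<And>n. (cmod (D n))\<^sup>2 = 4 * (cmod (1 - cinner (Z n) (Z (Suc n))))\<^sup>2 / (q n * q (Suc n))"
    by (simp only: Deq norm_divide norm_mult power_divide power_mult_distrib cmod_one_cnj q_def) simp
  have a0: "0 \<le> a" using al1 by (simp add: a_def)
  define \<kappa> where "\<kappa> = 4 * \<alpha> / (\<alpha> + 1)\<^sup>2"
  have ka: "1 - a\<^sup>2 = \<kappa>"
  proof -
    have "(\<alpha> + 1)\<^sup>2 - (\<alpha> - 1)\<^sup>2 = 4 * \<alpha>" by (simp add: power2_eq_square algebra_simps)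
    then show ?thesis using al1 by (simp add: a_def \<kappa>_def power_divide diff_divide_distrib[symmetric] divide_simps)
  qed
  have kpos: "\<kappa> > 0" using al1 by (simp add: \<kappa>_def)
  have Kk: "K = 4 / \<kappa>" using al1 by (simp add: K_def \<kappa>_def)
  have H1: "\<And>n. (cmod (D n))\<^sup>2 \<le> K * t n * t (Suc n)"
  proof -
    fix n
    define E where "E = (cmod (1 - cinner (Z n) (Z (Suc n))))\<^sup>2"
    have E0: "E > 0" using one_minus_cinner_nz[of "Z n" "Z (Suc n)"] Zin[of n] Zin[of "Suc n"]
      by (simp add: E_def unit_ball_def)
    have "1 - s n * s (Suc n) / E \<le> a\<^sup>2"
      using sqrt_le_sq[OF dstep[of n, unfolded dB_def] a0] by (simp add: s_def E_def)
    then have "\<kappa> \<le> s n * s (Suc n) / E" using ka by linarith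
    then have "\<kappa> * E \<le> s n * s (Suc n)" using E0 by (simp add: le_divide_eq)
    then have "E \<le> s n * s (Suc n) / \<kappa>" using kpos by (simp add: le_divide_eq mult.commute)
    then have "4 * E / (q n * q (Suc n)) \<le> 4 * (s n * s (Suc n) / \<kappa>) / (q n * q (Suc n))"
      using qpos[of n] qpos[of "Suc n"] by (intro divide_right_mono mult_left_mono) auto
    also have "\<dots> = K * t n * t (Suc n)"
      using qpos[of n] qpos[of "Suc n"] kpos by (simp add: Kk ht field_simps)
    finally show "(cmod (D n))\<^sup>2 \<le> K * t n * t (Suc n)" by (simp add: nD E_def)
  qed
  define W where "W = (\<lambda>n. (norm (ww n - ww (Suc n)))\<^sup>2)"
  have H2: "\<And>n. Re (D n) = t n + t (Suc n) + W n"
    by (simp add: D_def Rezz_t norm_diff_sq W_def)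
  have H3: "\<And>n. Im (D n) = Im (zz n) - Im (zz (Suc n)) - 2 * Im (cinner (ww n) (ww (Suc n)))"
    by (simp add: D_def)
  have W0: "\<And>n. W n \<ge> 0" by (simp add: W_def)
  have Tsq: "\<And>n. (t n + t (Suc n))\<^sup>2 + (Im (D n))\<^sup>2 + 2 * (t n + t (Suc n)) * W n \<le> (cmod (D n))\<^sup>2"
  proof -
    fix n
    have e: "(cmod (D n))\<^sup>2 = (t n + t (Suc n) + W n)\<^sup>2 + (Im (D n))\<^sup>2" by (simp add: cmod_power2 H2)
    have "(t n + t (Suc n) + W n)\<^sup>2 = (t n + t (Suc n))\<^sup>2 + 2 * (t n + t (Suc n)) * W n + (W n)\<^sup>2"
      by (simp add: power2_eq_square algebra_simps)
    moreover have "0 \<le> (W n)\<^sup>2" by simp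
    ultimately show "(t n + t (Suc n))\<^sup>2 + (Im (D n))\<^sup>2 + 2 * (t n + t (Suc n)) * W n \<le> (cmod (D n))\<^sup>2"
      using e by linarith
  qed
  define \<rho> where "\<rho> = (\<lambda>n. t n / t (Suc n))"
  have rhopos: "\<And>n. \<rho> n > 0" using tpos by (simp add: \<rho>_def)
  have rho_ineq: "\<And>n. (\<rho> n + 1)\<^sup>2 \<le> K * \<rho> n"
  proof -
    fix n
    have "(t n + t (Suc n))\<^sup>2 \<le> K * t n * t (Suc n)"
      using Tsq[of n] H1[of n] W0[of n] tpos[of n] tpos[of "Suc n"]
      by (smt (verit) mult_nonneg_nonneg zero_le_power2)
    then have "(t n + t (Suc n))\<^sup>2 / (t (Suc n))\<^sup>2 \<le> K * t n * t (Suc n) / (t (Suc n))\<^sup>2"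
      using tpos[of "Suc n"] by (intro divide_right_mono) auto
    moreover have "(t n + t (Suc n))\<^sup>2 / (t (Suc n))\<^sup>2 = (\<rho> n + 1)\<^sup>2"
      using tpos[of "Suc n"] by (simp add: \<rho>_def power_divide[symmetric] add_divide_distrib)
    moreover have "K * t n * t (Suc n) / (t (Suc n))\<^sup>2 = K * \<rho> n"
      using tpos[of "Suc n"] by (simp add: \<rho>_def power2_eq_square)
    ultimately show "(\<rho> n + 1)\<^sup>2 \<le> K * \<rho> n" by simp
  qed
  have prod: "\<And>n. (\<alpha> * \<rho> n - 1) * (\<rho> n - \<alpha>) \<le> 0"
  proof -
    fix n
    have "\<alpha> * (\<rho> n + 1)\<^sup>2 \<le> \<alpha> * (K * \<rho> n)" using rho_ineq[of n] al1 by (intro mult_left_mono) auto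
    also have "\<alpha> * (K * \<rho> n) = (\<alpha> + 1)\<^sup>2 * \<rho> n" using al1 by (simp add: K_def)
    finally have "\<alpha> * (\<rho> n + 1)\<^sup>2 - (\<alpha> + 1)\<^sup>2 * \<rho> n \<le> 0" by simp
    moreover have "(\<alpha> * \<rho> n - 1) * (\<rho> n - \<alpha>) = \<alpha> * (\<rho> n + 1)\<^sup>2 - (\<alpha> + 1)\<^sup>2 * \<rho> n"
      by (simp add: power2_eq_square algebra_simps)
    ultimately show "(\<alpha> * \<rho> n - 1) * (\<rho> n - \<alpha>) \<le> 0" by simp
  qed
  have rho_up: "\<And>n. \<rho> n \<le> \<alpha>"
  proof (rule ccontr)
    fix n assume "\<not> \<rho> n \<le> \<alpha>"
    then have r: "\<rho> n > \<alpha>" by simp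
    have "\<alpha> * \<rho> n > \<alpha> * \<alpha>" using r al1 by (intro mult_strict_left_mono) auto
    moreover have "\<alpha> * \<alpha> > 1" using al1 by (metis less_1_mult)
    ultimately have "\<alpha> * \<rho> n - 1 > 0" by simp
    then have "(\<alpha> * \<rho> n - 1) * (\<rho> n - \<alpha>) > 0" using r by (intro mult_pos_pos) auto
    then show False using prod[of n] by simp
  qed
  have rho_lo: "\<And>n. \<alpha> * \<rho> n \<ge> 1"
  proof (rule ccontr)
    fix n assume "\<not> \<alpha> * \<rho> n \<ge> 1"
    then have r: "\<alpha> * \<rho> n - 1 < 0" by simp
    have "\<rho> n < \<alpha>"
    proof (rule ccontr)
      assume "\<not> \<rho> n < \<alpha>"
      then have "\<alpha> * \<alpha> \<le> \<alpha> * \<rho> n" using al1 by (intro mult_left_mono) auto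
      moreover have "\<alpha> * \<alpha> > 1" using al1 by (metis less_1_mult)
      ultimately show False using r by simp
    qed
    then have "(\<alpha> * \<rho> n - 1) * (\<rho> n - \<alpha>) > 0" using r by (intro mult_neg_neg) auto
    then show False using prod[of n] by simp
  qed
  define \<sigma> where "\<sigma> = (\<lambda>n. s n / s (Suc n))"
  define g where "g = (\<lambda>n. q (Suc n) / q n)"
  have gpos: "\<And>n. g n > 0" using qpos by (simp add: g_def)
  have rsg: "\<And>n. \<rho> n = \<sigma> n * g n"
    using qpos spos by (simp add: \<rho>_def \<sigma>_def g_def ht field_simps)
  have glim: "g \<longlonglongrightarrow> 1"
  proof -
    have "g \<longlonglongrightarrow> 4 / 4" unfolding g_def by (intro tendsto_intros LIMSEQ_Suc qlim) auto
    then show ?thesis by simp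
  qed
  have sig_lim: "\<sigma> \<longlonglongrightarrow> \<alpha>"
  proof (rule order_tendstoI)
    fix y assume y: "y < \<alpha>"
    have "eventually (\<lambda>n. (\<alpha> - (\<alpha> - y) / 2) * (1 - (norm (Z (Suc n)))\<^sup>2) \<le> 1 - (norm (Z n))\<^sup>2) sequentially"
      using y by (intro julia_seq[OF f rep Zin bwd conv]) auto
    then show "eventually (\<lambda>n. y < \<sigma> n) sequentially"
    proof eventually_elim
      case (elim n)
      then have "\<alpha> - (\<alpha> - y) / 2 \<le> \<sigma> n" using spos[of "Suc n"] by (simp add: \<sigma>_def s_def le_divide_eq)
      moreover have "y < \<alpha> - (\<alpha> - y) / 2" using y by (simp add: field_simps)
      ultimately show "y < \<sigma> n" by (rule order_less_le_trans[rotated])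
    qed
  next
    fix y assume y: "y > \<alpha>"
    have "(\<lambda>n. \<alpha> / g n) \<longlonglongrightarrow> \<alpha> / 1" by (intro tendsto_intros glim) auto
    then have "eventually (\<lambda>n. \<alpha> / g n < y) sequentially" using y by (intro order_tendstoD) auto
    then show "eventually (\<lambda>n. \<sigma> n < y) sequentially"
    proof eventually_elim
      case (elim n)
      have "\<sigma> n * g n \<le> \<alpha>" using rho_up[of n] by (simp add: rsg)
      then have "\<sigma> n \<le> \<alpha> / g n" using gpos[of n] by (simp add: le_divide_eq)
      then show "\<sigma> n < y" using elim by linarith
    qed
  qed
  have rho_lim: "\<rho> \<longlonglongrightarrow> \<alpha>"
  proof -
    have "(\<lambda>n. \<sigma> n * g n) \<longlonglongrightarrow> \<alpha> * 1" by (intro tendsto_intros sig_lim glim)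
    then show ?thesis by (simp add: rsg[abs_def])
  qed
  define \<psi> where "\<psi> = (\<lambda>n. ((cmod (D n))\<^sup>2 - (t n + t (Suc n))\<^sup>2) / (t (Suc n))\<^sup>2)"
  have psi_up: "\<And>n. \<psi> n \<le> K * \<rho> n - (\<rho> n + 1)\<^sup>2"
  proof -
    fix n
    have tp: "t (Suc n) > 0" by (rule tpos)
    have "\<psi> n \<le> (K * t n * t (Suc n) - (t n + t (Suc n))\<^sup>2) / (t (Suc n))\<^sup>2"
      unfolding \<psi>_def using H1[of n] tp by (intro divide_right_mono) auto
    also have "\<dots> = K * \<rho> n - (\<rho> n + 1)\<^sup>2"
      using tp by (simp add: \<rho>_def field_simps power2_eq_square)
    finally show "\<psi> n \<le> K * \<rho> n - (\<rho> n + 1)\<^sup>2" .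
  qed
  have psi_Im: "\<And>n. (Im (D n) / t (Suc n))\<^sup>2 \<le> \<psi> n"
  proof -
    fix n
    have "(Im (D n))\<^sup>2 \<le> (cmod (D n))\<^sup>2 - (t n + t (Suc n))\<^sup>2"
      using Tsq[of n] W0[of n] tpos[of n] tpos[of "Suc n"] by (smt (verit) mult_nonneg_nonneg)
    then show "(Im (D n) / t (Suc n))\<^sup>2 \<le> \<psi> n"
      unfolding \<psi>_def power_divide using tpos[of "Suc n"] by (intro divide_right_mono) auto
  qed
  have psi_W: "\<And>n. 2 * (W n / t (Suc n)) \<le> \<psi> n"
  proof -
    fix n
    have tp: "t (Suc n) > 0" by (rule tpos)
    have "2 * t (Suc n) * W n \<le> 2 * (t n + t (Suc n)) * W n"
      using W0[of n] tpos[of n] by (intro mult_right_mono) auto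
    moreover have "0 \<le> (Im (D n))\<^sup>2" by simp
    ultimately have "2 * t (Suc n) * W n \<le> (cmod (D n))\<^sup>2 - (t n + t (Suc n))\<^sup>2"
      using Tsq[of n] by linarith
    then have "2 * t (Suc n) * W n / (t (Suc n))\<^sup>2 \<le> \<psi> n"
      unfolding \<psi>_def using tp by (intro divide_right_mono) auto
    moreover have "2 * t (Suc n) * W n / (t (Suc n))\<^sup>2 = 2 * (W n / t (Suc n))"
      using tp by (simp add: power2_eq_square)
    ultimately show "2 * (W n / t (Suc n)) \<le> \<psi> n" by simp
  qed
  have Kal: "K * \<alpha> - (\<alpha> + 1)\<^sup>2 = 0" using al1 by (simp add: K_def)
  have psi_lim: "\<psi> \<longlonglongrightarrow> 0"
  proof (rule squeeze0)
    show "\<And>n. 0 \<le> \<psi> n" using psi_Im by (meson order_trans zero_le_power2)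
    show "\<And>n. \<psi> n \<le> K * \<rho> n - (\<rho> n + 1)\<^sup>2" by (rule psi_up)
    have "(\<lambda>n. K * \<rho> n - (\<rho> n + 1)\<^sup>2) \<longlonglongrightarrow> K * \<alpha> - (\<alpha> + 1)\<^sup>2"
      by (intro tendsto_intros rho_lim)
    then show "(\<lambda>n. K * \<rho> n - (\<rho> n + 1)\<^sup>2) \<longlonglongrightarrow> 0" using Kal by simp
  qed
  have inv_t: "\<And>n. 1 / t n \<le> \<alpha> / t (Suc n)"
  proof -
    fix n
    have "1 \<le> \<alpha> * (t n / t (Suc n))" using rho_lo[of n] by (simp add: \<rho>_def)
    then have "t (Suc n) \<le> \<alpha> * t n" using tpos[of "Suc n"] by (simp add: field_simps)
    then show "1 / t n \<le> \<alpha> / t (Suc n)" using tpos[of n] tpos[of "Suc n"] by (simp add: field_simps)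
  qed
  have ImD_lim: "(\<lambda>n. \<bar>Im (D n)\<bar> / t n) \<longlonglongrightarrow> 0"
  proof -
    have "(\<lambda>n. (Im (D n) / t (Suc n))\<^sup>2) \<longlonglongrightarrow> 0"
      by (rule squeeze0[OF _ psi_Im psi_lim]) simp
    then have a1: "(\<lambda>n. \<bar>Im (D n) / t (Suc n)\<bar>) \<longlonglongrightarrow> 0" by (rule tendsto_sq_zero)
    have "(\<lambda>n. \<alpha> * \<bar>Im (D n) / t (Suc n)\<bar>) \<longlonglongrightarrow> \<alpha> * 0" by (intro tendsto_intros a1)
    then have lim2: "(\<lambda>n. \<alpha> * \<bar>Im (D n) / t (Suc n)\<bar>) \<longlonglongrightarrow> 0" by simp
    show ?thesis
    proof (rule squeeze0)
      fix n
      show "0 \<le> \<bar>Im (D n)\<bar> / t n" using tpos[of n] by simp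
      have "\<bar>Im (D n)\<bar> / t n = \<bar>Im (D n)\<bar> * (1 / t n)" by simp
      also have "\<dots> \<le> \<bar>Im (D n)\<bar> * (\<alpha> / t (Suc n))" using inv_t[of n] by (intro mult_left_mono) auto
      also have "\<dots> = \<alpha> * \<bar>Im (D n) / t (Suc n)\<bar>" using tpos[of "Suc n"] by simp
      finally show "\<bar>Im (D n)\<bar> / t n \<le> \<alpha> * \<bar>Im (D n) / t (Suc n)\<bar>" .
    qed (rule lim2)
  qed
  have W_lim: "(\<lambda>n. W n / t n) \<longlonglongrightarrow> 0"
  proof -
    have a1: "(\<lambda>n. W n / t (Suc n)) \<longlonglongrightarrow> 0"
    proof (rule squeeze0)
      show "\<And>n. 0 \<le> W n / t (Suc n)" using W0 tpos by (simp add: less_imp_le)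
      show "\<And>n. W n / t (Suc n) \<le> \<psi> n / 2" using psi_W by (simp add: field_simps)
      show "(\<lambda>n. \<psi> n / 2) \<longlonglongrightarrow> 0" using tendsto_divide[OF psi_lim tendsto_const[of 2]] by simp
    qed
    have "(\<lambda>n. \<alpha> * (W n / t (Suc n))) \<longlonglongrightarrow> \<alpha> * 0" by (intro tendsto_intros a1)
    then have lim2: "(\<lambda>n. \<alpha> * (W n / t (Suc n))) \<longlonglongrightarrow> 0" by simp
    show ?thesis
    proof (rule squeeze0)
      fix n
      show "0 \<le> W n / t n" using W0[of n] tpos[of n] by simp
      have "W n / t n = W n * (1 / t n)" by simp
      also have "\<dots> \<le> W n * (\<alpha> / t (Suc n))" using inv_t[of n] W0[of n] by (intro mult_left_mono) auto
      also have "\<dots> = \<alpha> * (W n / t (Suc n))" by simp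
      finally show "W n / t n \<le> \<alpha> * (W n / t (Suc n))" .
    qed (rule lim2)
  qed
  have dw_lim: "(\<lambda>n. norm (ww n - ww (Suc n)) / sqrt (t n)) \<longlonglongrightarrow> 0"
  proof -
    have "(\<lambda>n. (norm (ww n - ww (Suc n)) / sqrt (t n))\<^sup>2) \<longlonglongrightarrow> 0"
      using W_lim tpos by (simp add: power_divide W_def less_imp_le)
    then have "(\<lambda>n. \<bar>norm (ww n - ww (Suc n)) / sqrt (t n)\<bar>) \<longlonglongrightarrow> 0" by (rule tendsto_sq_zero)
    moreover have sabs: "\<And>n. \<bar>sqrt (t n)\<bar> = sqrt (t n)"
      using tpos by (intro abs_of_nonneg real_sqrt_ge_zero less_imp_le)
    ultimately show ?thesis by (simp add: sabs)
  qed
  define \<beta> where "\<beta> = (1 + \<alpha>) / 2"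
  have be1: "\<beta> > 1" and bea: "\<beta> < \<alpha>" using al1 by (auto simp: \<beta>_def)
  have ev_rho: "eventually (\<lambda>n. \<beta> < \<rho> n) sequentially"
    using rho_lim bea by (rule order_tendstoD)
  have ev_t: "eventually (\<lambda>n. t (Suc n) \<le> (1 / \<beta>) * t n) sequentially"
    using ev_rho
  proof eventually_elim
    case (elim n)
    then have "\<beta> * t (Suc n) \<le> t n" using tpos[of "Suc n"] by (simp add: \<rho>_def field_simps)
    then show "t (Suc n) \<le> (1 / \<beta>) * t n" using be1 by (simp add: field_simps)
  qed
  have ev_st: "eventually (\<lambda>n. sqrt (t (Suc n)) \<le> (1 / sqrt \<beta>) * sqrt (t n)) sequentially"
    using ev_t
  proof eventually_elim
    case (elim n)
    then have "sqrt (t (Suc n)) \<le> sqrt ((1 / \<beta>) * t n)" by (rule real_sqrt_le_mono)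
    then show ?case by (simp add: real_sqrt_mult real_sqrt_divide)
  qed
  have w_t: "(\<lambda>n. norm (ww n) / sqrt (t n)) \<longlonglongrightarrow> 0"
    by (rule geo[OF wlim _ ev_st _ _ dw_lim]) (use tpos be1 in auto)
  have w2_t: "(\<lambda>n. (norm (ww n))\<^sup>2 / t n) \<longlonglongrightarrow> 0"
  proof -
    have "(\<lambda>n. (norm (ww n) / sqrt (t n))\<^sup>2) \<longlonglongrightarrow> 0\<^sup>2" by (intro tendsto_intros w_t)
    then show ?thesis using tpos by (simp add: power_divide less_imp_le)
  qed
  have dIm: "(\<lambda>n. norm (Im (zz n) - Im (zz (Suc n))) / t n) \<longlonglongrightarrow> 0"
  proof -
    have bnd: "\<And>n. norm (Im (zz n) - Im (zz (Suc n))) / t n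
        \<le> \<bar>Im (D n)\<bar> / t n + 2 * ((norm (ww n) / sqrt (t n)) * (norm (ww n - ww (Suc n)) / sqrt (t n)))"
    proof -
      fix n
      define w w' where "w = ww n" and "w' = ww (Suc n)"
      have im0: "Im (cinner w w) = 0" by (simp add: cinner_self)
      have "Im (cinner w w') = Im (cinner w (w' - w))" by (simp add: cinner_diff_right im0)
      then have "\<bar>Im (cinner w w')\<bar> \<le> cmod (cinner w (w' - w))" by (simp add: abs_Im_le_cmod)
      also have "\<dots> \<le> norm w * norm (w' - w)" by (rule cinner_CS)
      finally have ic: "\<bar>Im (cinner w w')\<bar> \<le> norm w * norm (w - w')" by (simp add: norm_minus_commute)
      have "Im (zz n) - Im (zz (Suc n)) = Im (D n) + 2 * Im (cinner w w')" by (simp add: H3 w_def w'_def)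
      then have "norm (Im (zz n) - Im (zz (Suc n))) \<le> \<bar>Im (D n)\<bar> + 2 * (norm w * norm (w - w'))"
        using ic by simp
      then have "norm (Im (zz n) - Im (zz (Suc n))) / t n \<le> (\<bar>Im (D n)\<bar> + 2 * (norm w * norm (w - w'))) / t n"
        using tpos[of n] by (intro divide_right_mono) auto
      also have "\<dots> = \<bar>Im (D n)\<bar> / t n + 2 * ((norm w / sqrt (t n)) * (norm (w - w') / sqrt (t n)))"
        using tpos[of n] by (simp add: field_simps)
      finally show "norm (Im (zz n) - Im (zz (Suc n))) / t n
        \<le> \<bar>Im (D n)\<bar> / t n + 2 * ((norm (ww n) / sqrt (t n)) * (norm (ww n - ww (Suc n)) / sqrt (t n)))"
        by (simp add: w_def w'_def)
    qed
    have "(\<lambda>n. \<bar>Im (D n)\<bar> / t n + 2 * ((norm (ww n) / sqrt (t n)) * (norm (ww n - ww (Suc n)) / sqrt (t n))))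
        \<longlonglongrightarrow> 0 + 2 * (0 * 0)"
      by (intro tendsto_intros ImD_lim w_t dw_lim)
    then have lim2: "(\<lambda>n. \<bar>Im (D n)\<bar> / t n + 2 * ((norm (ww n) / sqrt (t n)) * (norm (ww n - ww (Suc n)) / sqrt (t n))))
        \<longlonglongrightarrow> 0" by simp
    have nn: "\<And>n. 0 \<le> norm (Im (zz n) - Im (zz (Suc n))) / t n" using tpos by (simp add: less_imp_le)
    show ?thesis by (rule squeeze0[OF nn bnd lim2])
  qed
  have Im_t: "(\<lambda>n. norm (Im (zz n)) / t n) \<longlonglongrightarrow> 0"
  proof (rule geo[OF Imlim _ ev_t _ _ dIm])
    show "\<And>n. 0 < t n" by (rule tpos)
    show "0 \<le> 1 / \<beta>" using be1 by simp
    show "1 / \<beta> < 1" using be1 by simp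
  qed
  have R1: "(\<lambda>n. Re (zz n) / t n) \<longlonglongrightarrow> 1"
  proof -
    have "(\<lambda>n. 1 + (norm (ww n))\<^sup>2 / t n) \<longlonglongrightarrow> 1 + 0" by (intro tendsto_intros w2_t)
    moreover have "\<And>n. Re (zz n) / t n = 1 + (norm (ww n))\<^sup>2 / t n"
    proof -
      fix n
      have "t n \<noteq> 0" using tpos[of n] by simp
      then show "Re (zz n) / t n = 1 + (norm (ww n))\<^sup>2 / t n" by (simp add: Rezz_t add_divide_distrib)
    qed
    ultimately show ?thesis by simp
  qed
  have R2: "(\<lambda>n. Im (zz n) / t n) \<longlonglongrightarrow> 0"
  proof -
    have tabs: "\<And>n. \<bar>t n\<bar> = t n" by (rule abs_of_pos[OF tpos])
    have "(\<lambda>n. \<bar>Im (zz n) / t n\<bar>) \<longlonglongrightarrow> 0" using Im_t by (simp add: abs_divide tabs)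
    then show ?thesis by (simp only: tendsto_rabs_zero_iff)
  qed
  have R5: "(\<lambda>n. (norm (Z n - cinner (Z n) e1 *s e1))\<^sup>2 / (1 - (cmod (cinner (Z n) e1))\<^sup>2)) \<longlonglongrightarrow> 0"
  proof -
    have "(\<lambda>n. ((norm (ww n))\<^sup>2 / t n) / (Re (zz n) / t n)) \<longlonglongrightarrow> 0 / 1"
      by (intro tendsto_intros w2_t R1) simp
    moreover have "\<And>n. ((norm (ww n))\<^sup>2 / t n) / (Re (zz n) / t n)
        = (norm (Z n - cinner (Z n) e1 *s e1))\<^sup>2 / (1 - (cmod (cinner (Z n) e1))\<^sup>2)"
    proof -
      fix n
      have "((norm (ww n))\<^sup>2 / t n) / (Re (zz n) / t n) = (norm (ww n))\<^sup>2 / Re (zz n)"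
        using tpos[of n] by simp
      also have "\<dots> = (norm (V n))\<^sup>2 / (1 - (cmod (u n))\<^sup>2)"
        using qpos[of n] by (simp add: nww Rezz)
      finally show "((norm (ww n))\<^sup>2 / t n) / (Re (zz n) / t n)
        = (norm (Z n - cinner (Z n) e1 *s e1))\<^sup>2 / (1 - (cmod (cinner (Z n) e1))\<^sup>2)"
        by (simp add: Ze V_def)
    qed
    ultimately show ?thesis by simp
  qed
  show ?thesis using R1 R2 w2_t rho_lim R5 by (simp add: \<rho>_def[abs_def])
qed


end
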